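(* Let $I$ be a BPPS instance with $d$ scenarios and let $\hat I$ be the instance obtained from $I$ by replacing small items as described in the context. Then $\mathrm{OPT}(\hat I)\le(1+2^{d+1}(d+1)\varepsilon)\,\mathrm{OPT}(I)+1$.
   Context: A BPPS instance has $d$ scenarios, items $\mathcal{I}$, each item $i$ with size $s_i$ and type (scenario set) $\mathcal{K}_i\subseteq\{1,\dots,d\}$, and bins of capacity $1$; $S_k=\{i:k\in\mathcal{K}_i\}$. A solution is a partition $\mathcal{B}$ of the items with $\sum_{i\in B\cap S_k}s_i\le1$ for all $B\in\mathcal{B}$ and all $k$, of value $\max_k|\{B\in\mathcal{B}:B\cap S_k\ne\emptyset\}|$; $\mathrm{OPT}$ is the minimum value. $\mathcal{T}$ is the set of all types. Fix $\varepsilon\in(0,1/4]$ with $1/\varepsilon$ an integer. Let $\mathcal{L}=\{i\in\mathcal{I}:s_i\ge\varepsilon^2\}$ and $\mathcal{S}=\mathcal{I}\setminus\mathcal{L}$; for $t\in\mathcal{T}$ let $\mathcal{S}_t$ be the items of $\mathcal{S}$ of type $t$, and let $\hat{\mathcal{S}}_t$ be a set of $\lceil\sum_{i\in\mathcal{S}_t}s_i/(\varepsilon-\varepsilon^2)\rceil$ new items, each of size $\varepsilon$ and type $t$. $\hat I$ is the instance with $d$ scenarios and item set $\mathcal{L}\cup\bigcup_{t\in\mathcal{T}}\hat{\mathcal{S}}_t$ (items of $\mathcal{L}$ keep their sizes and types). *)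

theory Defs
  imports Complex_Main "HOL-Library.Disjoint_Sets"
begin

definition bpps_instance :: "nat \<Rightarrow> 'a set \<Rightarrow> ('a \<Rightarrow> real) \<Rightarrow> ('a \<Rightarrow> nat set) \<Rightarrow> bool" where
  "bpps_instance d I s K \<longleftrightarrow> finite I \<and> (\<forall>i\<in>I. 0 < s i \<and> s i \<le> 1 \<and> K i \<subseteq> {1..d})"

definition scen :: "('a \<Rightarrow> nat set) \<Rightarrow> 'a set \<Rightarrow> nat \<Rightarrow> 'a set" where
  "scen K I k = {i\<in>I. k \<in> K i}"

definition bpps_feasible :: "nat \<Rightarrow> 'a set \<Rightarrow> ('a \<Rightarrow> real) \<Rightarrow> ('a \<Rightarrow> nat set) \<Rightarrow> 'a set set \<Rightarrow> bool" where
  "bpps_feasible d I s K P \<longleftrightarrow> partition_on I P \<and>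
     (\<forall>B\<in>P. \<forall>k\<in>{1..d}. (\<Sum>i\<in>B \<inter> scen K I k. s i) \<le> 1)"

definition bpps_value :: "nat \<Rightarrow> 'a set \<Rightarrow> ('a \<Rightarrow> nat set) \<Rightarrow> 'a set set \<Rightarrow> nat" where
  "bpps_value d I K P = Max (insert 0 ((\<lambda>k. card {B\<in>P. B \<inter> scen K I k \<noteq> {}}) ` {1..d}))"

definition bpps_opt :: "nat \<Rightarrow> 'a set \<Rightarrow> ('a \<Rightarrow> real) \<Rightarrow> ('a \<Rightarrow> nat set) \<Rightarrow> nat" where
  "bpps_opt d I s K = (LEAST v. \<exists>P. bpps_feasible d I s K P \<and> bpps_value d I K P = v)"

text \<open>The rounded instance \<hat>I. Large items keep their identity (Inl i); for each type t
  the new items of type t and size \<epsilon> are Inr (t, j) with j below the required count.\<close>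
definition small_count :: "'a set \<Rightarrow> ('a \<Rightarrow> real) \<Rightarrow> ('a \<Rightarrow> nat set) \<Rightarrow> real \<Rightarrow> nat set \<Rightarrow> nat" where
  "small_count I s K \<epsilon> t =
     nat \<lceil>(\<Sum>i\<in>{i\<in>I. s i < \<epsilon>\<^sup>2 \<and> K i = t}. s i) / (\<epsilon> - \<epsilon>\<^sup>2)\<rceil>"

definition hat_items :: "'a set \<Rightarrow> ('a \<Rightarrow> real) \<Rightarrow> ('a \<Rightarrow> nat set) \<Rightarrow> real \<Rightarrow> ('a + nat set \<times> nat) set" where
  "hat_items I s K \<epsilon> =
     Inl ` {i\<in>I. \<epsilon>\<^sup>2 \<le> s i} \<union>
     {Inr (t, j) | t j. t \<in> K ` I \<and> j < small_count I s K \<epsilon> t}"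

definition hat_size :: "('a \<Rightarrow> real) \<Rightarrow> real \<Rightarrow> ('a + nat set \<times> nat) \<Rightarrow> real" where
  "hat_size s \<epsilon> x = (case x of Inl i \<Rightarrow> s i | Inr _ \<Rightarrow> \<epsilon>)"

definition hat_type :: "('a \<Rightarrow> nat set) \<Rightarrow> ('a + nat set \<times> nat) \<Rightarrow> nat set" where
  "hat_type K x = (case x of Inl i \<Rightarrow> K i | Inr (t, _) \<Rightarrow> t)"

end

theory Submission
  imports Defs
begin

lemma assign_lemma:
  fixes q :: "'b \<Rightarrow> nat" and X :: "'c set"
  assumes "finite P" "finite X"
  shows "\<exists>h. (\<forall>B\<in>P. h B \<subseteq> X \<and> card (h B) \<le> q B)
     \<and> (\<forall>B\<in>P. \<forall>B'\<in>P. B \<noteq> B' \<longrightarrow> h B \<inter> h B' = {})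
     \<and> card (X - \<Union>(h ` P)) \<le> card X - sum q P"
  using assms(1)
proof (induction rule: finite_induct)
  case empty
  show ?case by (rule exI[of _ "\<lambda>_. {}"]) simp
next
  case (insert B P)
  then obtain h where h1: "\<forall>B\<in>P. h B \<subseteq> X \<and> card (h B) \<le> q B"
    and h2: "\<forall>B\<in>P. \<forall>B'\<in>P. B \<noteq> B' \<longrightarrow> h B \<inter> h B' = {}"
    and h3: "card (X - \<Union>(h ` P)) \<le> card X - sum q P" by blast
  define R where "R = X - \<Union>(h ` P)"
  have fR: "finite R" using assms(2) R_def by auto
  obtain Y where Y: "Y \<subseteq> R" "card Y = min (q B) (card R)"
    using obtain_subset_with_card_n[of "min (q B) (card R)" R] by auto
  define h' where "h' = h(B := Y)"
  have e: "\<forall>B0\<in>P. h' B0 = h B0" using insert(2) h'_def by auto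
  have hB: "h' B = Y" using h'_def by simp
  have "X - \<Union>(h' ` insert B P) = R - Y"
    using e hB R_def by auto
  then have "card (X - \<Union>(h' ` insert B P)) = card R - card Y"
    using Y fR by (simp add: card_Diff_subset finite_subset)
  also have "\<dots> \<le> card X - sum q (insert B P)"
    using Y(2) h3 R_def insert(1,2) by simp
  finally have c3: "card (X - \<Union>(h' ` insert B P)) \<le> card X - sum q (insert B P)" .
  have c1: "\<forall>B0\<in>insert B P. h' B0 \<subseteq> X \<and> card (h' B0) \<le> q B0"
    using e hB h1 Y R_def by auto
  have c2: "\<forall>B1\<in>insert B P. \<forall>B2\<in>insert B P. B1 \<noteq> B2 \<longrightarrow> h' B1 \<inter> h' B2 = {}"
    using e hB h2 Y R_def by blast
  show ?case using c1 c2 c3 by blast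
qed

lemma chunk_lemma:
  fixes X :: "'c set"
  assumes "finite X" "0 < M"
  shows "\<exists>C. partition_on X C \<and> (\<forall>c\<in>C. card c \<le> M) \<and> card C * M < card X + M"
  using assms(1)
proof (induction "card X" arbitrary: X rule: less_induct)
  case less
  show ?case
  proof (cases "card X \<le> M")
    case True
    show ?thesis
    proof (cases "X = {}")
      case True
      then show ?thesis using assms(2) by (intro exI[of _ "{}"]) (simp add: partition_on_empty)
    next
      case False
      then have "0 < card X" using less.prems by auto
      then show ?thesis using \<open>card X \<le> M\<close> assms(2) \<open>X \<noteq> {}\<close>
        by (intro exI[of _ "{X}"]) (simp add: partition_on_space)
    qed
  next
    case False
    obtain Y where Y: "Y \<subseteq> X" "card Y = M" "finite Y"
      using obtain_subset_with_card_n[of M X] False by auto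
    have lt: "card (X - Y) < card X" using Y False less.prems assms(2)
      by (simp add: card_Diff_subset)
    obtain C where C: "partition_on (X - Y) C" "\<forall>c\<in>C. card c \<le> M" "card C * M < card (X - Y) + M"
      using less.hyps[OF lt] less.prems by auto
    have fC: "finite C" using C(1) less.prems finite_elements by blast
    have Yne: "Y \<noteq> {}" using Y assms(2) by auto
    have YC: "Y \<notin> C" using C(1) Yne Y(1) unfolding partition_on_def by auto
    have p: "partition_on X (insert Y C)"
      using C(1) Y Yne YC by (subst partition_on_insert) (auto simp: disjnt_def partition_on_def)
    have "card (insert Y C) * M = card C * M + M" using fC YC by simp
    also have "\<dots> < card (X - Y) + M + M" using C(3) by simp
    also have "\<dots> = card X + M" using Y False by (simp add: card_Diff_subset)
    finally show ?thesis using p C(2) Y(2) by auto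
  qed
qed


lemma arith_aux:
  fixes n m :: nat and c e q sg nn :: real
  assumes "real n \<le> sg / e + 2 * sg + 1" "sg / e - c \<le> real m" "sg \<le> c" "1 \<le> c"
  shows "real (n - m) \<le> 4 * c"
proof (cases "m \<le> n")
  case True
  then have "real (n - m) = real n - real m" by simp
  then show ?thesis using assms by linarith
next
  case False
  then show ?thesis using assms by simp
qed

theorem lemma8:
  fixes d :: nat and I :: "'a set" and s :: "'a \<Rightarrow> real" and K :: "'a \<Rightarrow> nat set"
    and \<epsilon> :: real
  assumes "bpps_instance d I s K"
    and "0 < \<epsilon>" and "\<epsilon> \<le> 1/4" and "\<exists>m::nat. 1 / \<epsilon> = real m"
  shows "real (bpps_opt d (hat_items I s K \<epsilon>) (hat_size s \<epsilon>) (hat_type K))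
         \<le> (1 + 2 ^ (d + 1) * real (d + 1) * \<epsilon>) * real (bpps_opt d I s K) + 1"
proof -
  have fI: "finite I" and sI: "\<And>i. i \<in> I \<Longrightarrow> 0 < s i \<and> s i \<le> 1 \<and> K i \<subseteq> {1..d}"
    using assms(1) unfolding bpps_instance_def by auto
  have ep: "0 < \<epsilon>" "\<epsilon> \<le> 1/4" using assms(2,3) by auto
  obtain M :: nat where M: "1 / \<epsilon> = real M" using assms(4) by blast
  have Mpos: "0 < M" using M ep by (metis divide_pos_pos of_nat_0_less_iff zero_less_one)
  have epM: "\<epsilon> * real M = 1" using M ep by (metis divide_eq_eq less_irrefl mult.commute)
  define OPT where "OPT = bpps_opt d I s K"
  define H where "H = hat_items I s K \<epsilon>"
  define hs where "hs = hat_size s \<epsilon>"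
  define hk where "hk = hat_type K"
  define Lg where "Lg = {i\<in>I. \<epsilon>\<^sup>2 \<le> s i}"
  define sm where "sm t = {i\<in>I. s i < \<epsilon>\<^sup>2 \<and> K i = t}" for t
  define \<sigma> where "\<sigma> t = sum s (sm t)" for t
  define n where "n t = small_count I s K \<epsilon> t" for t
  define X :: "nat set \<Rightarrow> ('a + nat set \<times> nat) set" where "X t = {Inr (t, j) | j. t \<in> K ` I \<and> j < n t}" for t
  define T where "T = K ` I - {{}}"
  have fT: "finite T" using fI T_def by auto
  have H_eq: "H = Inl ` Lg \<union> (\<Union>t\<in>K ` I. X t)"
    unfolding H_def hat_items_def Lg_def X_def n_def by blast
  have Xim: "t \<in> K ` I \<Longrightarrow> X t = (\<lambda>j. Inr (t, j)) ` {..<n t}" for t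
    unfolding X_def by auto
  have fX: "finite (X t)" for t
    by (cases "t \<in> K ` I") (auto simp: Xim X_def)
  have cX: "t \<in> K ` I \<Longrightarrow> card (X t) = n t" for t
    by (simp add: Xim card_image inj_on_def)
  have Xform: "x \<in> X t \<Longrightarrow> \<exists>j. x = Inr (t, j)" for x t unfolding X_def by auto
  have XinH: "X t \<subseteq> H" for t
    unfolding H_eq X_def by auto
  have Xdisj: "t \<noteq> t' \<Longrightarrow> X t \<inter> X t' = {}" for t t' unfolding X_def by auto
  have hkX: "x \<in> X t \<Longrightarrow> hk x = t" for x t unfolding X_def hk_def hat_type_def by auto
  have hsX: "x \<in> X t \<Longrightarrow> hs x = \<epsilon>" for x t unfolding X_def hs_def hat_size_def by auto
  have hkL: "hk (Inl i) = K i" for i unfolding hk_def hat_type_def by simp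
  have hsL: "hs (Inl i) = s i" for i unfolding hs_def hat_size_def by simp
  have scenH: "scen hk H k = {x\<in>H. k \<in> hk x}" for k unfolding scen_def by simp
  have fsI: "bpps_feasible d I s K ((\<lambda>x. {x}) ` I)"
  proof -
    have "sum s ({i} \<inter> scen K I k) \<le> 1" if "i \<in> I" for i k
    proof (cases "i \<in> scen K I k")
      case True
      then have "{i} \<inter> scen K I k = {i}" by auto
      then show ?thesis using sI[OF that] by simp
    next
      case False
      then have "{i} \<inter> scen K I k = {}" by auto
      then show ?thesis by simp
    qed
    then show ?thesis unfolding bpps_feasible_def by (auto simp: partition_on_singletons)
  qed
  have "\<exists>P. bpps_feasible d I s K P \<and> bpps_value d I K P = OPT"
    unfolding OPT_def bpps_opt_def
    by (rule LeastI_ex) (use fsI in blast)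
  then obtain P where Pf: "bpps_feasible d I s K P" and Pv: "bpps_value d I K P = OPT" by blast
  have Ppart: "partition_on I P" and Pcap: "\<And>B k. B \<in> P \<Longrightarrow> k \<in> {1..d} \<Longrightarrow> sum s (B \<inter> scen K I k) \<le> 1"
    using Pf unfolding bpps_feasible_def by auto
  have fP: "finite P" using Ppart fI finite_elements by blast
  have BI: "B \<in> P \<Longrightarrow> B \<subseteq> I" for B using Ppart unfolding partition_on_def by auto
  have fB: "B \<in> P \<Longrightarrow> finite B" for B using BI fI finite_subset by blast
  have Pdisj: "B1 \<in> P \<Longrightarrow> B2 \<in> P \<Longrightarrow> B1 \<noteq> B2 \<Longrightarrow> B1 \<inter> B2 = {}" for B1 B2
    using Ppart unfolding partition_on_def disjoint_def by auto
  have Pcov: "i \<in> I \<Longrightarrow> \<exists>B\<in>P. i \<in> B" for i using Ppart unfolding partition_on_def by auto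
  define Pk where "Pk k = {B\<in>P. B \<inter> scen K I k \<noteq> {}}" for k
  have PkOPT: "k \<in> {1..d} \<Longrightarrow> card (Pk k) \<le> OPT" for k
  proof -
    assume k: "k \<in> {1..d}"
    have "card (Pk k) \<in> insert 0 ((\<lambda>k. card {B\<in>P. B \<inter> scen K I k \<noteq> {}}) ` {1..d})"
      using k Pk_def by auto
    moreover have "finite (insert 0 ((\<lambda>k. card {B\<in>P. B \<inter> scen K I k \<noteq> {}}) ` {1..d}))" by simp
    ultimately have "card (Pk k) \<le> Max (insert 0 ((\<lambda>k. card {B\<in>P. B \<inter> scen K I k \<noteq> {}}) ` {1..d}))"
      by (rule Max_ge[rotated])
    then show ?thesis using Pv unfolding bpps_value_def by simp
  qed
  define a where "a B t = sum s {i\<in>B. s i < \<epsilon>\<^sup>2 \<and> K i = t}" for B t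
  define q where "q t B = nat \<lfloor>a B t / \<epsilon>\<rfloor>" for t B
  have "\<forall>t. \<exists>h. (\<forall>B\<in>P. h B \<subseteq> X t \<and> card (h B) \<le> q t B)
     \<and> (\<forall>B\<in>P. \<forall>B'\<in>P. B \<noteq> B' \<longrightarrow> h B \<inter> h B' = {})
     \<and> card (X t - \<Union>(h ` P)) \<le> card (X t) - sum (q t) P"
    using assign_lemma[OF fP fX] by blast
  then obtain hh where hh1: "\<And>t B. B \<in> P \<Longrightarrow> hh t B \<subseteq> X t \<and> card (hh t B) \<le> q t B"
     and hh2: "\<And>t B B'. B\<in>P \<Longrightarrow> B'\<in>P \<Longrightarrow> B \<noteq> B' \<Longrightarrow> hh t B \<inter> hh t B' = {}"
     and hh3: "\<And>t. card (X t - \<Union>(hh t ` P)) \<le> card (X t) - sum (q t) P"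
    by metis
  define Bp where "Bp B = Inl ` (B \<inter> Lg) \<union> (\<Union>t\<in>T. hh t B)" for B
  define Lft where "Lft = (\<Union>t\<in>T. X t - \<Union>(hh t ` P))"
  define E where "E = X {}"
  have fLft: "finite Lft" unfolding Lft_def using fT fX by auto
  obtain C where Cp: "partition_on Lft C" and Cc: "\<And>c. c \<in> C \<Longrightarrow> card c \<le> M"
     and CM: "card C * M < card Lft + M"
    using chunk_lemma[OF fLft Mpos] by blast
  have fC: "finite C" using Cp fLft finite_elements by blast
  define P' where "P' = (Bp ` P \<union> C \<union> {E}) - {{}}"
  have LgI: "Lg \<subseteq> I" unfolding Lg_def by auto
  have TKI: "T \<subseteq> K ` I" unfolding T_def by auto
  have BpH: "B \<in> P \<Longrightarrow> Bp B \<subseteq> H" for B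
  proof -
    assume B: "B \<in> P"
    have "Inl ` (B \<inter> Lg) \<subseteq> H" unfolding H_eq by auto
    moreover have "hh t B \<subseteq> H" for t using hh1[OF B] XinH by blast
    ultimately show ?thesis unfolding Bp_def by blast
  qed
  have fBp: "B \<in> P \<Longrightarrow> finite (Bp B)" for B
    unfolding Bp_def using fB fT hh1 fX finite_subset by (metis finite_Int finite_UN finite_Un finite_imageI)
  have LftH: "Lft \<subseteq> H" unfolding Lft_def using XinH by blast
  have EH: "E \<subseteq> H" unfolding E_def using XinH by blast
  have CU: "\<Union>C = Lft" using Cp unfolding partition_on_def by auto
  have UP': "\<Union>P' = H"
  proof
    show "\<Union>P' \<subseteq> H" unfolding P'_def using BpH LftH EH CU by blast
  next
    show "H \<subseteq> \<Union>P'"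
    proof
      fix x assume x: "x \<in> H"
      show "x \<in> \<Union>P'"
      proof (cases "x \<in> Inl ` Lg")
        case True
        then obtain i where i: "x = Inl i" "i \<in> Lg" by auto
        then obtain B where B: "B \<in> P" "i \<in> B" using Pcov LgI by blast
        then have "x \<in> Bp B" using i unfolding Bp_def by auto
        then show ?thesis unfolding P'_def using B by blast
      next
        case False
        then obtain t where t: "t \<in> K ` I" "x \<in> X t" using x H_eq by blast
        show ?thesis
        proof (cases "t = {}")
          case True
          then have "x \<in> E" using t E_def by simp
          then show ?thesis unfolding P'_def by blast
        next
          case False
          then have tT: "t \<in> T" using t T_def by blast
          show ?thesis
          proof (cases "x \<in> \<Union>(hh t ` P)")
            case True
            then obtain B where B: "B \<in> P" "x \<in> hh t B" by blast
            then have "x \<in> Bp B" using tT unfolding Bp_def by blast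
            then show ?thesis unfolding P'_def using B by blast
          next
            case False
            then have "x \<in> Lft" using tT t unfolding Lft_def by blast
            then show ?thesis unfolding P'_def using CU by blast
          qed
        qed
      qed
    qed
  qed
  have Bp_mem: "x \<in> Bp B \<Longrightarrow> (\<exists>i. x = Inl i \<and> i \<in> B \<and> i \<in> Lg) \<or> (\<exists>t\<in>T. x \<in> hh t B)" for x B
    unfolding Bp_def by blast
  have Lft_mem: "x \<in> Lft \<Longrightarrow> \<exists>t\<in>T. x \<in> X t \<and> (\<forall>B\<in>P. x \<notin> hh t B)" for x
    unfolding Lft_def by blast
  have Bp_disj: "B1 \<in> P \<Longrightarrow> B2 \<in> P \<Longrightarrow> B1 \<noteq> B2 \<Longrightarrow> Bp B1 \<inter> Bp B2 = {}" for B1 B2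
  proof -
    assume B: "B1 \<in> P" "B2 \<in> P" "B1 \<noteq> B2"
    { fix x assume x1: "x \<in> Bp B1" and x2: "x \<in> Bp B2"
      have False
      proof (cases "\<exists>i. x = Inl i")
        case True
        then obtain i where i: "x = Inl i" by blast
        have "i \<in> B1" "i \<in> B2" using Bp_mem[OF x1] Bp_mem[OF x2] i hh1 B Xform by fastforce+
        then show False using Pdisj[OF B] by blast
      next
        case False
        then obtain t1 t2 where t: "x \<in> hh t1 B1" "x \<in> hh t2 B2" using Bp_mem[OF x1] Bp_mem[OF x2] by blast
        then have "x \<in> X t1" "x \<in> X t2" using hh1 B by blast+
        then have "t1 = t2" using Xdisj by blast
        then show False using hh2[OF B] t by blast
      qed }
    then show ?thesis by blast
  qed
  have Bp_Lft: "B \<in> P \<Longrightarrow> Bp B \<inter> Lft = {}" for B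
  proof -
    assume B: "B \<in> P"
    { fix x assume x1: "x \<in> Bp B" and x2: "x \<in> Lft"
      obtain t where t: "t \<in> T" "x \<in> X t" "\<forall>B\<in>P. x \<notin> hh t B" using Lft_mem[OF x2] by blast
      have False
      proof (cases "\<exists>i. x = Inl i")
        case True
        then show False using t Xform by fastforce
      next
        case False
        then obtain t1 where t1: "x \<in> hh t1 B" using Bp_mem[OF x1] by blast
        then have "x \<in> X t1" using hh1 B by blast
        then have "t1 = t" using Xdisj t by blast
        then show False using t t1 B by blast
      qed }
    then show ?thesis by blast
  qed
  have Bp_E: "B \<in> P \<Longrightarrow> Bp B \<inter> E = {}" for B
  proof -
    assume B: "B \<in> P"
    { fix x assume x1: "x \<in> Bp B" and x2: "x \<in> E"
      have False
      proof (cases "\<exists>i. x = Inl i")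
        case True
        then show False using x2 E_def Xform by fastforce
      next
        case False
        then obtain t1 where t1: "t1 \<in> T" "x \<in> hh t1 B" using Bp_mem[OF x1] by blast
        then have "x \<in> X t1" using hh1 B by blast
        then have "t1 = {}" using Xdisj x2 E_def by blast
        then show False using t1 T_def by blast
      qed }
    then show ?thesis by blast
  qed
  have Lft_E: "Lft \<inter> E = {}"
    unfolding Lft_def E_def T_def using Xdisj by blast
  have Cdisj: "c1 \<in> C \<Longrightarrow> c2 \<in> C \<Longrightarrow> c1 \<noteq> c2 \<Longrightarrow> c1 \<inter> c2 = {}" for c1 c2
    using Cp unfolding partition_on_def disjoint_def by auto
  have P'part: "partition_on H P'"
  proof (rule partition_onI)
    show "\<Union>P' = H" by (rule UP')
    show "{} \<notin> P'" unfolding P'_def by blast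
    fix p1 p2 assume p: "p1 \<in> P'" "p2 \<in> P'" "p1 \<noteq> p2"
    have cases: "(\<exists>B\<in>P. p = Bp B) \<or> p \<in> C \<or> p = E" if "p \<in> P'" for p
      using that unfolding P'_def by blast
    have CL: "c \<in> C \<Longrightarrow> c \<subseteq> Lft" for c using CU by blast
    show "disjnt p1 p2" unfolding disjnt_def
      using cases[OF p(1)] cases[OF p(2)]
    proof (elim disjE bexE)
      fix B1 B2 assume "B1 \<in> P" "p1 = Bp B1" "B2 \<in> P" "p2 = Bp B2"
      then show "p1 \<inter> p2 = {}" using Bp_disj p(3) by blast
    qed (use p(3) Bp_Lft Bp_E Lft_E Cdisj CL in blast)+
  qed
  have eq_q: "\<epsilon> * real (q t B) \<le> a B t" and q_ge: "real (q t B) \<ge> a B t / \<epsilon> - 1"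
    if "B \<in> P" for t B
  proof -
    have "a B t \<ge> 0" unfolding a_def using sI BI[OF that] by (intro sum_nonneg) (auto simp: less_imp_le)
    then have a0: "a B t / \<epsilon> \<ge> 0" using ep by simp
    then have rq: "real (q t B) = of_int \<lfloor>a B t / \<epsilon>\<rfloor>" unfolding q_def by simp
    have "of_int \<lfloor>a B t / \<epsilon>\<rfloor> \<le> a B t / \<epsilon>" by (rule of_int_floor_le)
    then have "\<epsilon> * of_int \<lfloor>a B t / \<epsilon>\<rfloor> \<le> \<epsilon> * (a B t / \<epsilon>)"
      by (rule mult_left_mono) (use ep in simp)
    then show "\<epsilon> * real (q t B) \<le> a B t" using rq ep by simp
    show "real (q t B) \<ge> a B t / \<epsilon> - 1" using rq by linarith
  qed
  have capBp: "sum hs (Bp B \<inter> scen hk H k) \<le> 1" if B: "B \<in> P" and k: "k \<in> {1..d}" for B k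
  proof -
    define Tk where "Tk = {t\<in>T. k \<in> t}"
    define A where "A = {i\<in>B \<inter> Lg. k \<in> K i}"
    define S where "S = {i\<in>B. s i < \<epsilon>\<^sup>2 \<and> k \<in> K i}"
    have fTk: "finite Tk" using fT Tk_def by auto
    have fA: "finite A" using fB[OF B] A_def by auto
    have fS: "finite S" using fB[OF B] S_def by auto
    have seq: "Bp B \<inter> scen hk H k = Inl ` A \<union> (\<Union>t\<in>Tk. hh t B)"
    proof
      show "Bp B \<inter> scen hk H k \<subseteq> Inl ` A \<union> (\<Union>t\<in>Tk. hh t B)"
      proof
        fix x assume x: "x \<in> Bp B \<inter> scen hk H k"
        then have kx: "k \<in> hk x" using scenH by blast
        have "x \<in> Bp B" using x by blast
        from Bp_mem[OF this] show "x \<in> Inl ` A \<union> (\<Union>t\<in>Tk. hh t B)"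
        proof (elim disjE exE bexE conjE)
          fix i assume "x = Inl i" "i \<in> B" "i \<in> Lg"
          then show ?thesis using kx hkL A_def by auto
        next
          fix t assume "t \<in> T" "x \<in> hh t B"
          moreover then have "hk x = t" using hh1[OF B] hkX by blast
          ultimately show ?thesis using kx Tk_def by blast
        qed
      qed
    next
      show "Inl ` A \<union> (\<Union>t\<in>Tk. hh t B) \<subseteq> Bp B \<inter> scen hk H k"
      proof
        fix x assume x: "x \<in> Inl ` A \<union> (\<Union>t\<in>Tk. hh t B)"
        then have "x \<in> Bp B" unfolding Bp_def A_def Tk_def by blast
        moreover have "k \<in> hk x"
          using x hkL hh1[OF B] hkX unfolding A_def Tk_def by blast
        ultimately show "x \<in> Bp B \<inter> scen hk H k" using BpH[OF B] scenH by blast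
      qed
    qed
    have fU: "finite (\<Union>t\<in>Tk. hh t B)" using fTk hh1[OF B] fX finite_subset by blast
    have dj: "Inl ` A \<inter> (\<Union>t\<in>Tk. hh t B) = {}" using hh1[OF B] Xform by fastforce
    have "sum hs (Bp B \<inter> scen hk H k) = sum hs (Inl ` A) + sum hs (\<Union>t\<in>Tk. hh t B)"
      unfolding seq using fA fU dj by (simp add: sum.union_disjoint)
    also have "sum hs (Inl ` A) = sum s A" by (simp add: sum.reindex hsL)
    also have "sum hs (\<Union>t\<in>Tk. hh t B) = (\<Sum>t\<in>Tk. sum hs (hh t B))"
    proof (rule sum.UNION_disjoint)
      show "finite Tk" by (rule fTk)
      show "\<forall>t\<in>Tk. finite (hh t B)"
      proof
        fix t assume "t \<in> Tk"
        show "finite (hh t B)" using hh1[OF B, of t] fX[of t] by (rule finite_subset[OF conjunct1])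
      qed
      show "\<forall>t\<in>Tk. \<forall>t'\<in>Tk. t \<noteq> t' \<longrightarrow> hh t B \<inter> hh t' B = {}"
      proof (intro ballI impI)
        fix t t' :: "nat set" assume "t \<noteq> t'"
        then have "X t \<inter> X t' = {}" by (rule Xdisj)
        then show "hh t B \<inter> hh t' B = {}" using hh1[OF B, of t] hh1[OF B, of t'] by blast
      qed
    qed
    also have "\<dots> \<le> (\<Sum>t\<in>Tk. a B t)"
    proof (rule sum_mono)
      fix t assume "t \<in> Tk"
      have "sum hs (hh t B) = sum (\<lambda>_. \<epsilon>) (hh t B)"
        by (rule sum.cong) (use hh1[OF B, of t] hsX in auto)
      also have "\<dots> = \<epsilon> * real (card (hh t B))" by (simp add: mult.commute)
      also have "\<dots> \<le> \<epsilon> * real (q t B)" using hh1[OF B] ep by simp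
      also have "\<dots> \<le> a B t" using eq_q[OF B] .
      finally show "sum hs (hh t B) \<le> a B t" .
    qed
    also have "(\<Sum>t\<in>Tk. a B t) = sum s S"
    proof -
      have "(\<Sum>t\<in>Tk. a B t) = (\<Sum>t\<in>Tk. sum s {x. x \<in> S \<and> K x = t})"
      proof (rule sum.cong[OF refl])
        fix t assume "t \<in> Tk" then have kt: "k \<in> t" by (simp add: Tk_def)
        have "{i\<in>B. s i < \<epsilon>\<^sup>2 \<and> K i = t} = {x. x \<in> S \<and> K x = t}" using kt by (auto simp: S_def)
        then show "a B t = sum s {x. x \<in> S \<and> K x = t}" by (simp add: a_def)
      qed
      also have "\<dots> = sum s S"
        by (rule sum.group[OF fS fTk]) (use BI[OF B] in \<open>auto simp: S_def Tk_def T_def\<close>)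
      finally show ?thesis .
    qed
    also have "sum s A + sum s S = sum s (B \<inter> scen K I k)"
    proof -
      have "B \<inter> scen K I k = A \<union> S" using BI[OF B] unfolding A_def S_def Lg_def scen_def by auto
      moreover have "A \<inter> S = {}" unfolding A_def S_def Lg_def by auto
      ultimately show ?thesis using fA fS by (simp add: sum.union_disjoint)
    qed
    also have "\<dots> \<le> 1" using Pcap[OF B k] .
    finally show ?thesis by simp
  qed
  have LftX: "x \<in> Lft \<Longrightarrow> hs x = \<epsilon>" for x using Lft_mem hsX by blast
  have CL: "c \<in> C \<Longrightarrow> c \<subseteq> Lft" for c using CU by blast
  have capP': "sum hs (p \<inter> scen hk H k) \<le> 1" if p: "p \<in> P'" and k: "k \<in> {1..d}" for p k
  proof -
    have "(\<exists>B\<in>P. p = Bp B) \<or> p \<in> C \<or> p = E" using p unfolding P'_def by blast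
    then show ?thesis
    proof (elim disjE bexE)
      fix B assume "B \<in> P" "p = Bp B" then show ?thesis using capBp k by simp
    next
      assume pE: "p = E"
      have "E \<inter> scen hk H k = {}" unfolding E_def using hkX scenH by auto
      then show ?thesis using pE by simp
    next
      assume pC: "p \<in> C"
      have fc: "finite p" using CL[OF pC] fLft finite_subset by blast
      have "sum hs (p \<inter> scen hk H k) \<le> sum hs p"
        by (rule sum_mono2) (use fc CL[OF pC] LftX ep in \<open>auto simp: less_imp_le\<close>)
      also have "sum hs p = sum (\<lambda>_. \<epsilon>) p" by (rule sum.cong) (use CL[OF pC] LftX in auto)
      also have "\<dots> = \<epsilon> * real (card p)" by (simp add: mult.commute)
      also have "\<dots> \<le> \<epsilon> * real M" using Cc[OF pC] ep by simp
      also have "\<dots> = 1" using epM .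
      finally show ?thesis .
    qed
  qed
  have feasP': "bpps_feasible d H hs hk P'"
    unfolding bpps_feasible_def using P'part capP' by blast
  have optle: "bpps_opt d H hs hk \<le> bpps_value d H hk P'"
    unfolding bpps_opt_def by (rule Least_le) (use feasP' in blast)
  have fP': "finite P'" unfolding P'_def using fP fC by blast
  have cntsub: "{p\<in>P'. p \<inter> scen hk H k \<noteq> {}} \<subseteq> Bp ` Pk k \<union> C" for k
  proof
    fix p assume p: "p \<in> {p\<in>P'. p \<inter> scen hk H k \<noteq> {}}"
    then obtain x where x: "x \<in> p" "k \<in> hk x" using scenH by blast
    have "(\<exists>B\<in>P. p = Bp B) \<or> p \<in> C \<or> p = E" using p unfolding P'_def by blast
    then show "p \<in> Bp ` Pk k \<union> C"
    proof (elim disjE bexE)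
      assume "p \<in> C" then show ?thesis by blast
    next
      assume "p = E" then show ?thesis using x hkX E_def by auto
    next
      fix B assume B: "B \<in> P" and pB: "p = Bp B"
      have "x \<in> Bp B" using x pB by blast
      from Bp_mem[OF this] have "B \<inter> scen K I k \<noteq> {}"
      proof (elim disjE exE bexE conjE)
        fix i assume "x = Inl i" "i \<in> B" "i \<in> Lg"
        then show ?thesis using x hkL BI[OF B] unfolding scen_def by auto
      next
        fix t assume t: "t \<in> T" "x \<in> hh t B"
        then have kt: "k \<in> t" using hh1[OF B] hkX x by blast
        have "hh t B \<noteq> {}" using t by blast
        then have "card (hh t B) \<ge> 1" using hh1[OF B] fX finite_subset
          by (metis One_nat_def Suc_leI card_gt_0_iff)
        then have "q t B \<ge> 1" using hh1[OF B] by (meson le_trans)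
        then have "\<epsilon> \<le> \<epsilon> * real (q t B)" using ep by simp
        then have "a B t > 0" using eq_q[OF B, of t] ep by linarith
        then have "{i\<in>B. s i < \<epsilon>\<^sup>2 \<and> K i = t} \<noteq> {}" unfolding a_def by (metis less_irrefl sum.empty)
        then show ?thesis using kt BI[OF B] unfolding scen_def by auto
      qed
      then show ?thesis using B pB Pk_def by blast
    qed
  qed
  have cnt: "card {p\<in>P'. p \<inter> scen hk H k \<noteq> {}} \<le> card (Pk k) + card C" for k
  proof -
    have fPk: "finite (Pk k)" using fP Pk_def by auto
    have "card {p\<in>P'. p \<inter> scen hk H k \<noteq> {}} \<le> card (Bp ` Pk k \<union> C)"
      by (rule card_mono) (use fPk fC cntsub in auto)
    also have "\<dots> \<le> card (Bp ` Pk k) + card C" by (rule card_Un_le)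
    also have "\<dots> \<le> card (Pk k) + card C" using card_image_le[OF fPk] by simp
    finally show ?thesis .
  qed
  have ep1: "\<epsilon> < 1" using ep by simp
  have s0: "i \<in> I \<Longrightarrow> 0 \<le> s i" for i using sI less_imp_le by blast
  have lft_t: "real (card (X t - \<Union>(hh t ` P))) \<le> 4 * real OPT" if tT: "t \<in> T" for t
  proof -
    obtain i0 where i0: "i0 \<in> I" "K i0 = t" using tT T_def by blast
    obtain k where kt: "k \<in> t" using tT T_def by blast
    have k: "k \<in> {1..d}" using sI[OF i0(1)] i0(2) kt by blast
    have fPk: "finite (Pk k)" using fP Pk_def by auto
    define Y where "Y B = {i\<in>B. s i < \<epsilon>\<^sup>2 \<and> K i = t}" for B
    have aY: "a B t = sum s (Y B)" for B unfolding a_def Y_def by simp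
    have smU: "sm t = (\<Union>B\<in>P. Y B)"
    proof
      show "sm t \<subseteq> (\<Union>B\<in>P. Y B)"
      proof
        fix i assume i: "i \<in> sm t"
        then have iI: "i \<in> I" unfolding sm_def by simp
        obtain B where B: "B \<in> P" "i \<in> B" using Pcov[OF iI] by blast
        have "i \<in> Y B" using i B(2) unfolding sm_def Y_def by simp
        then show "i \<in> (\<Union>B\<in>P. Y B)" using B(1) by blast
      qed
      show "(\<Union>B\<in>P. Y B) \<subseteq> sm t"
      proof
        fix i assume "i \<in> (\<Union>B\<in>P. Y B)"
        then obtain B where B: "B \<in> P" "i \<in> Y B" by blast
        then have "i \<in> I" using BI[OF B(1)] unfolding Y_def by blast
        then show "i \<in> sm t" using B(2) unfolding sm_def Y_def by simp
      qed
    qed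
    have "\<sigma> t = (\<Sum>B\<in>P. a B t)" unfolding \<sigma>_def smU aY
      by (rule sum.UNION_disjoint) (use fP fB Pdisj Y_def in \<open>auto\<close>)
    also have "\<dots> = (\<Sum>B\<in>Pk k. a B t)"
    proof (rule sum.mono_neutral_right[OF fP])
      show "Pk k \<subseteq> P" using Pk_def by auto
      show "\<forall>B\<in>P - Pk k. a B t = 0"
      proof
        fix B assume B: "B \<in> P - Pk k"
        have BP: "B \<in> P" and Bn: "B \<inter> scen K I k = {}" using B unfolding Pk_def by auto
        have "i \<notin> Y B" for i
        proof
          assume i: "i \<in> Y B"
          then have "i \<in> B" "K i = t" unfolding Y_def by auto
          moreover then have "i \<in> I" using BI[OF BP] by blast
          ultimately have "i \<in> B \<inter> scen K I k" using kt unfolding scen_def by simp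
          then show False using Bn by blast
        qed
        then have "Y B = {}" by blast
        then show "a B t = 0" using aY by simp
      qed
    qed
    finally have sig: "\<sigma> t = (\<Sum>B\<in>Pk k. a B t)" .
    have aB1: "a B t \<le> 1" if "B \<in> Pk k" for B
    proof -
      have B: "B \<in> P" using that Pk_def by auto
      have "a B t \<le> sum s (B \<inter> scen K I k)" unfolding aY
        by (rule sum_mono2) (use fB[OF B] BI[OF B] kt s0 in \<open>auto simp: Y_def scen_def\<close>)
      also have "\<dots> \<le> 1" using Pcap[OF B k] .
      finally show ?thesis .
    qed
    have sigle: "\<sigma> t \<le> real (card (Pk k))" unfolding sig
      using sum_mono[of "Pk k" "\<lambda>B. a B t" "\<lambda>_. 1"] aB1 by simp
    have sig0: "0 \<le> \<sigma> t" unfolding \<sigma>_def sm_def by (rule sum_nonneg) (use s0 in auto)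
    have "sum (q t) (Pk k) \<le> sum (q t) P" by (rule sum_mono2[OF fP]) (auto simp: Pk_def)
    then have sqP: "real (sum (q t) (Pk k)) \<le> real (sum (q t) P)" by (simp only: of_nat_le_iff)
    have "\<sigma> t / \<epsilon> - real (card (Pk k)) = (\<Sum>B\<in>Pk k. a B t / \<epsilon> - 1)"
      unfolding sig by (simp add: sum_subtractf sum_divide_distrib)
    also have "\<dots> \<le> (\<Sum>B\<in>Pk k. real (q t B))"
      by (rule sum_mono) (use q_ge Pk_def in auto)
    also have "\<dots> = real (sum (q t) (Pk k))" by simp
    also have "\<dots> \<le> real (sum (q t) P)" by (rule sqP)
    finally have sq: "real (sum (q t) P) \<ge> \<sigma> t / \<epsilon> - real (card (Pk k))" .
    have epp: "0 < \<epsilon> - \<epsilon>\<^sup>2" using ep ep1 by (simp add: power2_eq_square)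
    have "n t = nat \<lceil>\<sigma> t / (\<epsilon> - \<epsilon>\<^sup>2)\<rceil>" unfolding n_def small_count_def \<sigma>_def sm_def by simp
    moreover have "0 \<le> \<sigma> t / (\<epsilon> - \<epsilon>\<^sup>2)" using sig0 epp by simp
    ultimately have nt: "real (n t) \<le> \<sigma> t / (\<epsilon> - \<epsilon>\<^sup>2) + 1" by linarith
    have split: "\<sigma> t / (\<epsilon> - \<epsilon>\<^sup>2) = \<sigma> t / \<epsilon> + \<sigma> t / (1 - \<epsilon>)"
    proof -
      have "\<epsilon> - \<epsilon>\<^sup>2 = \<epsilon> * (1 - \<epsilon>)" by (simp add: power2_eq_square algebra_simps)
      then show ?thesis using ep ep1 by (simp add: field_simps)
    qed
    have "\<sigma> t / (1 - \<epsilon>) \<le> 2 * \<sigma> t"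
    proof -
      have "(2*\<epsilon>) * \<sigma> t \<le> 1 * \<sigma> t" by (rule mult_right_mono) (use ep sig0 in auto)
      then have "\<sigma> t \<le> 2 * \<sigma> t * (1 - \<epsilon>)" by (simp add: algebra_simps)
      then show ?thesis using ep1 by (simp add: pos_divide_le_eq)
    qed
    then have nt2: "real (n t) \<le> \<sigma> t / \<epsilon> + 2 * \<sigma> t + 1" using nt split by linarith
    have one: "1 \<le> card (Pk k)"
    proof -
      obtain B where B: "B \<in> P" "i0 \<in> B" using Pcov[OF i0(1)] by blast
      then have "B \<in> Pk k" using kt i0 unfolding Pk_def scen_def by auto
      then show ?thesis using fPk by (metis One_nat_def Suc_leI card_gt_0_iff empty_iff)
    qed
    have cX': "card (X t) = n t" using cX tT T_def by blast
    have one': "1 \<le> real (card (Pk k))" using one by simp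
    have "real (card (X t - \<Union>(hh t ` P))) \<le> real (n t - sum (q t) P)"
      using hh3[of t] cX' by simp
    also have "\<dots> \<le> 4 * real (card (Pk k))"
      by (rule arith_aux[OF nt2 sq sigle one'])
    also have "\<dots> \<le> 4 * real OPT" using PkOPT[OF k] by simp
    finally show ?thesis .
  qed
  have cT: "card T \<le> 2 ^ d"
  proof -
    have "T \<subseteq> Pow {1..d}" using sI T_def by auto
    then have "card T \<le> card (Pow {1..d})" by (rule card_mono[rotated]) simp
    then show ?thesis by (simp add: card_Pow)
  qed
  have cLft: "real (card Lft) \<le> 2 ^ d * (4 * real OPT)"
  proof -
    have c1: "card Lft \<le> (\<Sum>t\<in>T. card (X t - \<Union>(hh t ` P)))" unfolding Lft_def by (rule card_UN_le[OF fT])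
    have cT': "real (card T) \<le> 2 ^ d"
    proof -
      have "real (card T) \<le> real (2 ^ d)" using cT by (simp only: of_nat_le_iff)
      then show ?thesis by simp
    qed
    have "real (card Lft) \<le> real (\<Sum>t\<in>T. card (X t - \<Union>(hh t ` P)))" using c1 by (simp only: of_nat_le_iff)
    also have "\<dots> = (\<Sum>t\<in>T. real (card (X t - \<Union>(hh t ` P))))" by (rule of_nat_sum)
    also have "\<dots> \<le> (\<Sum>t\<in>T. 4 * real OPT)" by (rule sum_mono) (erule lft_t)
    also have "\<dots> = real (card T) * (4 * real OPT)" by simp
    also have "\<dots> \<le> 2 ^ d * (4 * real OPT)" by (rule mult_right_mono[OF cT']) simp
    finally show ?thesis .
  qed
  have cC: "real (card C) \<le> real (card Lft) * \<epsilon> + 1"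
  proof -
    have "real (card C * M) < real (card Lft + M)" using CM by (simp only: of_nat_less_iff)
    then have "real (card C) * real M < real (card Lft) + real M" by simp
    then have "real (card C) * real M * \<epsilon> \<le> (real (card Lft) + real M) * \<epsilon>"
      using ep by (intro mult_right_mono) auto
    then have "real (card C) * (\<epsilon> * real M) \<le> real (card Lft) * \<epsilon> + \<epsilon> * real M"
      by (simp add: algebra_simps)
    then show ?thesis using epM by simp
  qed
  define bound where "bound = (1 + 2 ^ (d + 1) * real (d + 1) * \<epsilon>) * real OPT + 1"
  have bnd: "real (card {p\<in>P'. p \<inter> scen hk H k \<noteq> {}}) \<le> bound" if k: "k \<in> {1..d}" for k
  proof -
    have d1: "1 \<le> d" using k by simp
    have "real (card {p\<in>P'. p \<inter> scen hk H k \<noteq> {}}) \<le> real (card (Pk k) + card C)"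
      using cnt[of k] by (simp only: of_nat_le_iff)
    then have h1: "real (card {p\<in>P'. p \<inter> scen hk H k \<noteq> {}}) \<le> real (card (Pk k)) + real (card C)" by simp
    have h2: "real (card (Pk k)) \<le> real OPT" using PkOPT[OF k] by (simp only: of_nat_le_iff)
    have h3: "real (card Lft) * \<epsilon> \<le> 2 ^ d * (4 * real OPT) * \<epsilon>"
      by (rule mult_right_mono[OF cLft]) (use ep in simp)
    have "(2::real) ^ d * 4 \<le> 2 ^ (d + 1) * real (d + 1)"
    proof -
      have r: "2 \<le> real (d + 1)" using d1 by simp
      have "(2::real) ^ d * 2 * 2 \<le> 2 ^ d * 2 * real (d + 1)"
        by (rule mult_left_mono[OF r]) simp
      then show ?thesis by simp
    qed
    then have "(2::real) ^ d * 4 * (real OPT * \<epsilon>) \<le> 2 ^ (d + 1) * real (d + 1) * (real OPT * \<epsilon>)"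
      by (rule mult_right_mono) (use ep in simp)
    then have h4: "2 ^ d * (4 * real OPT) * \<epsilon> \<le> 2 ^ (d + 1) * real (d + 1) * \<epsilon> * real OPT"
      by (simp add: mult_ac)
    have h5: "bound = real OPT + 2 ^ (d + 1) * real (d + 1) * \<epsilon> * real OPT + 1"
      unfolding bound_def by (simp add: algebra_simps)
    show ?thesis using h1 h2 h3 h4 h5 cC by linarith
  qed
  have b0: "0 \<le> bound" unfolding bound_def using ep by simp
  define V where "V = insert 0 ((\<lambda>k. card {p\<in>P'. p \<inter> scen hk H k \<noteq> {}}) ` {1..d})"
  have MV: "Max V \<in> V" unfolding V_def by (rule Max_in) auto
  have Vb: "real v \<le> bound" if "v \<in> V" for v
    using that bnd b0 unfolding V_def by auto
  have "bpps_value d H hk P' = Max V" unfolding bpps_value_def V_def by simp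
  then have "real (bpps_value d H hk P') \<le> bound" using Vb[OF MV] by simp
  moreover have "real (bpps_opt d H hs hk) \<le> real (bpps_value d H hk P')" using optle by (simp only: of_nat_le_iff)
  ultimately have "real (bpps_opt d H hs hk) \<le> bound" by (rule order_trans[rotated])
  then show ?thesis unfolding H_def hs_def hk_def OPT_def bound_def .
qed

end
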